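(* Let $F$, $H$, $X$, $\Omega$, $Q$ and the sequences generated by the IneIREG method be as described in the context, and assume $H$ is $\mu$-strongly monotone for some $\mu>0$. Let $\varepsilon>0$, let $\mathcal D_0>\varepsilon$ satisfy $\mathcal D_0\ge\overline\lambda C_HD_X/\underline\lambda$, and suppose $\eta_k\equiv\eta:=\varepsilon/(2\mathcal D_0)$ for all $k\ge0$; $\lambda_k\in[\underline\lambda,\overline\lambda]$ for all $k\ge0$ with $0<\underline\lambda\le\overline\lambda<1/L$, where $L:=L_F+\eta L_H$; and $\alpha_0\in[0,1]$ and $\alpha_{k+1}\le(1-\beta_k)\alpha_k$ for all $k\ge0$, where $\beta_k:=\big(\frac{1}{1-\lambda_k^2L^2}+\frac{1}{2\lambda_k\eta\mu}\big)^{-1}$. Define $p_{-1}:=1$, $p_k:=\big(\prod_{i=0}^k(1-\beta_i)\big)^{-1}$ for $k\ge0$, and for $k\ge1$, $\Lambda_k:=\sum_{j=0}^{k-1}\lambda_j\eta p_j$ and $\overline y_k:=\Lambda_k^{-1}\sum_{j=0}^{k-1}\lambda_j\eta p_jy_j$. Then for all $k\ge1$ satisfying $$k\ge\Big\lceil\Big(\frac{1}{1-\overline\lambda^2L^2}+\frac{\mathcal D_0}{\underline\lambda\mu\varepsilon}\Big)\log\Big(\frac{2(k+1)D_X^2\mathcal D_0}{\underline\lambda\varepsilon^2}\Big)\Big\rceil$$ we have $-B_H\,\mathrm{dist}(\overline y_k,Q)\le\mathrm{Gap}(\overline y_k,H,Q)\le\varepsilon$ and $0\le\mathrm{Gap}(\overline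 y_k,F,X)\le\varepsilon$; moreover, if $Q$ is $\sigma$-weakly sharp of order $\mathcal M\ge1$, then $\mathrm{Gap}(\overline y_k,H,Q)\ge-\big(B_H/\sigma^{1/\mathcal M}\big)\varepsilon^{1/\mathcal M}$ for such $k$.
   Context: Work in $\mathbb{R}^n$ with Euclidean inner product $\langle\cdot,\cdot\rangle$ and norm $\|\cdot\|$. The maps $F\colon \mathrm{Dom}\,F\to\mathbb{R}^n$ and $H\colon\mathrm{Dom}\,H\to\mathbb{R}^n$ are monotone and Lipschitz continuous with constants $L_F>0$ and $L_H>0$; $H$ is $\mu$-strongly monotone means $\langle H(x)-H(y),x-y\rangle\ge\mu\|x-y\|^2$ for all $x,y\in\mathrm{Dom}\,H$. $X$ is a nonempty compact convex set and $\Omega$ a nonempty closed convex set with $X\subset\Omega\subset\mathrm{Dom}\,F\cap\mathrm{Dom}\,H$; $P_X,P_\Omega$ denote orthogonal projections. $Q:=\{x\in X:\langle F(x),y-x\rangle\ge0\ \forall y\in X\}$ is assumed nonempty. $D_X:=\sup_{x,y\in X}\|x-y\|$, $C_H:=\sup_{x\in X}\|H(x)\|$, $B_H:=\sup_{x\in Q}\|H(x)\|$, $\mathrm{dist}(y,Q)$ is the Euclidean distance to $Q$. $\mathrm{Gap}(z,H,Q):=\sup_{x\in Q}\langle H(x),z-x\rangle$, $\mathrm{Gap}(z,F,X):=\sup_{x\in X}\langle F(x),z-x\rangle$. $Q$ is $\sigma$-weakly sharp of order $\mathcal M\ge1$ ($\sigma>0$) if $\langle F(x),y-x\rangle\ge\sigma\,\mathrm{dist}(y,Q)^{\mathcal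 M}$ for all $x\in Q$, $y\in X$. IneIREG method: start with $x_0=x_{-1}\in X$; for $k=0,1,\dots$, with parameters $\alpha_k\ge0$, $\lambda_k>0$, $\eta_k>0$, set $w_k=x_k+\alpha_k(x_k-x_{k-1})$, $w'_k=P_\Omega(w_k)$, $y_k=P_X\big(w_k-\lambda_k(F(w'_k)+\eta_kH(w'_k))\big)$, $x_{k+1}=P_X\big(w_k-\lambda_k(F(y_k)+\eta_kH(y_k))\big)$. *)

theory Defs
  imports "HOL-Analysis.Analysis"
begin

definition monotone_op :: "('a::real_inner \<Rightarrow> 'a) \<Rightarrow> 'a set \<Rightarrow> bool" where
  "monotone_op F S \<longleftrightarrow> (\<forall>x\<in>S. \<forall>y\<in>S. inner (F x - F y) (x - y) \<ge> 0)"

definition strongly_monotone_op :: "real \<Rightarrow> ('a::real_inner \<Rightarrow> 'a) \<Rightarrow> 'a set \<Rightarrow> bool" where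
  "strongly_monotone_op \<mu> H S \<longleftrightarrow>
     (\<forall>x\<in>S. \<forall>y\<in>S. inner (H x - H y) (x - y) \<ge> \<mu> * (norm (x - y))\<^sup>2)"

definition VI_sol :: "('a::real_inner \<Rightarrow> 'a) \<Rightarrow> 'a set \<Rightarrow> 'a set" where
  "VI_sol F X = {x \<in> X. \<forall>y\<in>X. inner (F x) (y - x) \<ge> 0}"

definition Gap :: "'a::real_inner \<Rightarrow> ('a \<Rightarrow> 'a) \<Rightarrow> 'a set \<Rightarrow> real" where
  "Gap z G S = (SUP x\<in>S. inner (G x) (z - x))"

definition weakly_sharp :: "real \<Rightarrow> real \<Rightarrow> ('a::real_inner \<Rightarrow> 'a) \<Rightarrow> 'a set \<Rightarrow> 'a set \<Rightarrow> bool" where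
  "weakly_sharp \<sigma> M F X Q \<longleftrightarrow>
     (\<forall>x\<in>Q. \<forall>y\<in>X. inner (F x) (y - x) \<ge> \<sigma> * (infdist y Q) powr M)"

end

theory Submission
  imports Defs
begin

lemma proj_dot:
  fixes S :: "'a::euclidean_space set"
  assumes "convex S" "closed S" "S \<noteq> {}" "v \<in> S"
  shows "inner (z - closest_point S z) (v - closest_point S z) \<le> 0"
  by (rule any_closest_point_dot[OF assms(1,2) closest_point_in_set[OF assms(2,3)] assms(4)])
     (use closest_point_exists[OF assms(2,3)] in auto)

lemma eg_step:
  fixes X :: "'a::euclidean_space set"
  assumes cX: "convex X" "closed X" "X \<noteq> {}"
    and yd: "y = closest_point X (w - lam *\<^sub>R Gw')"
    and x1d: "x1 = closest_point X (w - lam *\<^sub>R Gy)"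
    and nw: "norm (w' - y) \<le> norm (w - y)"
    and lipG: "norm (Gy - Gw') \<le> L * norm (w' - y)"
    and xX: "x \<in> X" and lp: "lam > 0" and L0: "L \<ge> 0"
  shows "(norm (x1 - x))\<^sup>2 \<le> (norm (w - x))\<^sup>2 - (1 - lam\<^sup>2 * L\<^sup>2) * (norm (w - y))\<^sup>2
           - 2 * lam * inner Gy (y - x)"
proof -
  have yX: "y \<in> X" using yd closest_point_in_set[OF cX(2,3)] by simp
  have x1X: "x1 \<in> X" using x1d closest_point_in_set[OF cX(2,3)] by simp
  have i1: "inner (w - lam *\<^sub>R Gy - x1) (x - x1) \<le> 0"
    using proj_dot[OF cX xX, of "w - lam *\<^sub>R Gy"] x1d by simp
  have i2: "inner (w - lam *\<^sub>R Gw' - y) (x1 - y) \<le> 0"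
    using proj_dot[OF cX x1X, of "w - lam *\<^sub>R Gw'"] yd by simp
  have e1: "(norm (x1 - x))\<^sup>2 = (norm (w - x))\<^sup>2 - (norm (w - x1))\<^sup>2 + 2 * inner (w - x1) (x - x1)"
    by (simp add: power2_norm_eq_inner inner_diff_left inner_diff_right inner_commute algebra_simps)
  have e2: "inner (w - lam *\<^sub>R Gy - x1) (x - x1) = inner (w - x1) (x - x1) - lam * inner Gy (x - x1)"
    by (simp add: inner_diff_left)
  have e3: "inner Gy (x - x1) = - inner Gy (y - x) + inner Gy (y - x1)"
    by (simp add: inner_diff_right)
  have e4: "(norm (w - x1))\<^sup>2 = (norm (w - y))\<^sup>2 + (norm (y - x1))\<^sup>2 + 2 * inner (w - y) (y - x1)"
    by (simp add: power2_norm_eq_inner inner_diff_left inner_diff_right inner_commute algebra_simps)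
  have e5: "inner (w - lam *\<^sub>R Gw' - y) (x1 - y) = - inner (w - y) (y - x1) + lam * inner Gw' (y - x1)"
    by (simp add: inner_diff_left inner_diff_right inner_commute algebra_simps)
  have e6: "inner Gy (y - x1) - inner Gw' (y - x1) = inner (Gy - Gw') (y - x1)"
    by (simp add: inner_diff_left)
  have cs: "inner (Gy - Gw') (y - x1) \<le> L * norm (w - y) * norm (y - x1)"
  proof -
    have "inner (Gy - Gw') (y - x1) \<le> norm (Gy - Gw') * norm (y - x1)"
      by (rule norm_cauchy_schwarz)
    also have "\<dots> \<le> L * norm (w' - y) * norm (y - x1)"
      by (rule mult_right_mono[OF lipG], simp)
    also have "\<dots> \<le> L * norm (w - y) * norm (y - x1)"
      by (intro mult_right_mono mult_left_mono nw L0) simp_all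
    finally show ?thesis .
  qed
  have sq: "2 * lam * (L * norm (w - y) * norm (y - x1)) \<le> (norm (y - x1))\<^sup>2 + lam\<^sup>2 * L\<^sup>2 * (norm (w - y))\<^sup>2"
  proof -
    have "0 \<le> (norm (y - x1) - lam * L * norm (w - y))\<^sup>2" by simp
    thus ?thesis by (simp add: power2_eq_square algebra_simps)
  qed
  have cs2: "2 * lam * inner (Gy - Gw') (y - x1) \<le> 2 * lam * (L * norm (w - y) * norm (y - x1))"
    using cs lp by simp
  show ?thesis
    using e1 e2 e3 e4 e5 e6 i1 i2 cs2 sq lp
    by (simp add: algebra_simps)
qed

lemma norm_add_scale_sq:
  fixes u v :: "'a::real_inner"
  shows "(norm (u + a *\<^sub>R v))\<^sup>2 = (norm u)\<^sup>2 + 2 * a * inner u v + a\<^sup>2 * (norm v)\<^sup>2"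
  unfolding power2_norm_eq_inner
  by (simp add: inner_add_left inner_add_right inner_commute algebra_simps power2_eq_square)

lemma harm:
  fixes a b s t :: real
  assumes "a > 0" "b > 0" "s \<ge> 0" "t \<ge> 0"
  shows "inverse (1/a + 1/b) * (s + t)\<^sup>2 \<le> a * s\<^sup>2 + b * t\<^sup>2"
proof -
  have "inverse (1/a + 1/b) = a * b / (a + b)" using assms by (simp add: field_simps)
  moreover have "a * b * (s + t)\<^sup>2 \<le> (a + b) * (a * s\<^sup>2 + b * t\<^sup>2)"
  proof -
    have "0 \<le> (a * s - b * t)\<^sup>2" by simp
    thus ?thesis by (simp add: power2_eq_square algebra_simps)
  qed
  ultimately show ?thesis using assms by (simp add: field_simps)
qed



lemma geo_sum:
  fixes q :: "nat \<Rightarrow> real"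
  assumes qp: "\<And>j. 0 < q j" and q3: "\<And>j. q (Suc j) \<le> 3 * q j"
  shows "(\<Sum>j<Suc m. q j) \<ge> (3/2 - 1/(2*(real m + 1))) * q m"
proof (induction m)
  case 0
  then show ?case by simp
next
  case (Suc m)
  have c0: "0 \<le> 3/2 - 1/(2*(real m + 1))" by (simp add: field_simps)
  have "(\<Sum>j<Suc (Suc m). q j) = (\<Sum>j<Suc m. q j) + q (Suc m)" by simp
  also have "\<dots> \<ge> (3/2 - 1/(2*(real m + 1))) * q m + q (Suc m)" using Suc by simp
  finally have 1: "(\<Sum>j<Suc (Suc m). q j) \<ge> (3/2 - 1/(2*(real m + 1))) * q m + q (Suc m)" .
  have "(3/2 - 1/(2*(real m + 1))) * q m \<ge> (3/2 - 1/(2*(real m + 1))) * (q (Suc m) / 3)"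
    using q3[of m] c0 by (intro mult_left_mono) auto
  moreover have "(3/2 - 1/(2*(real m + 1))) * (q (Suc m) / 3) + q (Suc m) \<ge> (3/2 - 1/(2*(real (Suc m) + 1))) * q (Suc m)"
  proof -
    have "(3/2 - 1/(2*(real m + 1))) / 3 + 1 \<ge> (3/2 - 1/(2*(real (Suc m) + 1)))"
      by (simp add: field_simps)
    then have "((3/2 - 1/(2*(real m + 1))) / 3 + 1) * q (Suc m) \<ge> (3/2 - 1/(2*(real (Suc m) + 1))) * q (Suc m)"
      using qp[of "Suc m"] by (intro mult_right_mono) auto
    moreover have "((3/2 - 1/(2*(real m + 1))) / 3 + 1) * q (Suc m) = (3/2 - 1/(2*(real m + 1))) * (q (Suc m) / 3) + q (Suc m)"
      by (simp add: field_simps)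
    ultimately show ?thesis by linarith
  qed
  ultimately show ?case using 1 by linarith
qed

lemma telesc:
  fixes P a e d :: "nat \<Rightarrow> real"
  assumes "\<And>j. P (Suc j) * a (Suc j) \<le> P j * a j + e j - d j"
  shows "P m * a m + (\<Sum>j<m. d j) \<le> P 0 * a 0 + (\<Sum>j<m. e j)"
proof (induction m)
  case 0 then show ?case by simp
next
  case (Suc m) then show ?case using assms[of m] by simp
qed


theorem theorem4p20:
  fixes F H :: "'a::euclidean_space \<Rightarrow> 'a"
    and DF DH X \<Omega> :: "'a set"
    and LF LH \<mu> \<epsilon> D0 \<eta> lam_lo lam_hi :: real
    and lam alpha :: "nat \<Rightarrow> real"
    and x w w' y :: "nat \<Rightarrow> 'a"
  assumes F_mono: "monotone_op F DF" and F_lip: "LF-lipschitz_on DF F" and LF_pos: "LF > 0"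
    and H_mono: "monotone_op H DH" and H_lip: "LH-lipschitz_on DH H" and LH_pos: "LH > 0"
    and H_strong: "strongly_monotone_op \<mu> H DH" and mu_pos: "\<mu> > 0"
    and X_ne: "X \<noteq> {}" and X_compact: "compact X" and X_convex: "convex X"
    and Om_ne: "\<Omega> \<noteq> {}" and Om_closed: "closed \<Omega>" and Om_convex: "convex \<Omega>"
    and X_sub: "X \<subseteq> \<Omega>" and Om_sub: "\<Omega> \<subseteq> DF \<inter> DH"
    and Q_ne: "VI_sol F X \<noteq> {}"
    and eps_pos: "\<epsilon> > 0"
    and D0_gt: "D0 > \<epsilon>"
    and D0_ge: "D0 \<ge> lam_hi * (SUP z\<in>X. norm (H z)) * diameter X / lam_lo"
    and eta_def: "\<eta> = \<epsilon> / (2 * D0)"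
    and lam_bounds: "\<And>k. lam_lo \<le> lam k \<and> lam k \<le> lam_hi"
    and lam_l_pos: "0 < lam_lo" and lam_lu: "lam_lo \<le> lam_hi" and lam_u: "lam_hi < 1 / (LF + \<eta> * LH)"
    and alpha_nonneg: "\<And>k. alpha k \<ge> 0"
    and alpha0: "alpha 0 \<le> 1"
    and alpha_dec: "\<And>k. alpha (Suc k) \<le>
          (1 - inverse (1 / (1 - (lam k)\<^sup>2 * (LF + \<eta> * LH)\<^sup>2) + 1 / (2 * lam k * \<eta> * \<mu>))) * alpha k"
    and x0: "x 0 \<in> X"
    and w_def: "\<And>k. w k = x k + alpha k *\<^sub>R (x k - (if k = 0 then x 0 else x (k - 1)))"
    and w'_def: "\<And>k. w' k = closest_point \<Omega> (w k)"
    and y_def: "\<And>k. y k = closest_point X (w k - lam k *\<^sub>R (F (w' k) + \<eta> *\<^sub>R H (w' k)))"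
    and x_def: "\<And>k. x (Suc k) = closest_point X (w k - lam k *\<^sub>R (F (y k) + \<eta> *\<^sub>R H (y k)))"
  shows
    "let L = LF + \<eta> * LH;
         Q = VI_sol F X;
         DX = diameter X;
         BH = (SUP z\<in>Q. norm (H z));
         beta = (%k. inverse (1 / (1 - (lam k)\<^sup>2 * L\<^sup>2) + 1 / (2 * lam k * \<eta> * \<mu>)));
         p = (%k. inverse (\<Prod>i\<le>k. (1 - beta i)));
         Lam = (%k. \<Sum>j<k. lam j * \<eta> * p j);
         ybar = (%k. inverse (Lam k) *\<^sub>R (\<Sum>j<k. (lam j * \<eta> * p j) *\<^sub>R y j))
     in \<forall>k\<ge>1. int k \<ge> \<lceil>(1 / (1 - lam_hi\<^sup>2 * L\<^sup>2) + D0 / (lam_lo * \<mu> * \<epsilon>))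
                          * ln (2 * (real k + 1) * DX\<^sup>2 * D0 / (lam_lo * \<epsilon>\<^sup>2))\<rceil> \<longrightarrow>
          (- BH * infdist (ybar k) Q \<le> Gap (ybar k) H Q \<and> Gap (ybar k) H Q \<le> \<epsilon>
           \<and> 0 \<le> Gap (ybar k) F X \<and> Gap (ybar k) F X \<le> \<epsilon>
           \<and> (\<forall>\<sigma> M. \<sigma> > 0 \<and> M \<ge> 1 \<and> weakly_sharp \<sigma> M F X Q \<longrightarrow>
                 Gap (ybar k) H Q \<ge> - (BH / \<sigma> powr (1 / M)) * \<epsilon> powr (1 / M)))"
  proof -
  define L where "L = LF + \<eta> * LH"
  define Q where "Q = VI_sol F X"
  define DX where "DX = diameter X"
  define CH where "CH = (SUP z\<in>X. norm (H z))"
  define BH where "BH = (SUP z\<in>Q. norm (H z))"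
  define beta where "beta = (%k. inverse (1 / (1 - (lam k)\<^sup>2 * L\<^sup>2) + 1 / (2 * lam k * \<eta> * \<mu>)))"
  define p where "p = (%k. inverse (\<Prod>i\<le>k. (1 - beta i)))"
  define Lam where "Lam = (%k. \<Sum>j<k. lam j * \<eta> * p j)"
  define ybar where "ybar = (%k. inverse (Lam k) *\<^sub>R (\<Sum>j<k. (lam j * \<eta> * p j) *\<^sub>R y j))"
  define P where "P = (%k. inverse (\<Prod>i<k. (1 - beta i)))"
  define G where "G = (%z. F z + \<eta> *\<^sub>R H z)"
  have clX: "closed X" and bX: "bounded X" using X_compact compact_imp_closed compact_imp_bounded by auto
  have eta_pos: "\<eta> > 0" using eta_def eps_pos D0_gt by simp
  have eta_half: "\<eta> < 1/2"
  proof -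
    have "\<eta> = (\<epsilon> / D0) / 2" using eta_def by simp
    moreover have "\<epsilon> / D0 < 1" using eps_pos D0_gt by simp
    ultimately show ?thesis by simp
  qed
  have L_pos: "L > 0" unfolding L_def using LF_pos LH_pos eta_pos by (simp add: add_pos_pos)
  have lam_pos: "lam k > 0" for k using lam_bounds[of k] lam_l_pos by linarith
  have lamL: "lam k * L < 1" for k
  proof -
    have "lam k < 1 / L" using lam_bounds[of k] lam_u unfolding L_def by linarith
    thus ?thesis using L_pos by (simp add: field_simps)
  qed
  have a_pos: "0 < 1 - (lam k)\<^sup>2 * L\<^sup>2" for k
  proof -
    have "0 \<le> lam k * L" using lam_pos[of k] L_pos by simp
    hence "(lam k * L)\<^sup>2 < 1" using lamL[of k] by (simp add: power_less_one_iff abs_less_iff)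
    thus ?thesis by (simp add: power_mult_distrib)
  qed
  have b_pos: "0 < 2 * lam k * \<eta> * \<mu>" for k using lam_pos[of k] eta_pos mu_pos by simp
  have beta_pos: "0 < beta k" for k
  proof -
    have "0 < 1 / (1 - (lam k)\<^sup>2 * L\<^sup>2)" using a_pos[of k] by simp
    moreover have "0 < 1 / (2 * lam k * \<eta> * \<mu>)" using b_pos[of k] by simp
    ultimately have "0 < 1 / (1 - (lam k)\<^sup>2 * L\<^sup>2) + 1 / (2 * lam k * \<eta> * \<mu>)" by (rule add_pos_pos)
    thus ?thesis unfolding beta_def by (rule positive_imp_inverse_positive)
  qed
  have beta_lt1: "beta k < 1" for k
  proof -
    have "1 \<le> 1 / (1 - (lam k)\<^sup>2 * L\<^sup>2)" using a_pos[of k] lam_pos[of k] L_pos by (simp add: field_simps)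
    moreover have "0 < 1 / (2 * lam k * \<eta> * \<mu>)" using b_pos[of k] by simp
    ultimately have "1 < 1 / (1 - (lam k)\<^sup>2 * L\<^sup>2) + 1 / (2 * lam k * \<eta> * \<mu>)" by linarith
    thus ?thesis unfolding beta_def by (simp add: inverse_less_1_iff)
  qed
  have alpha_dec': "alpha (Suc k) \<le> (1 - beta k) * alpha k" for k
    using alpha_dec[of k] unfolding beta_def L_def .
  have x_in: "x k \<in> X" for k
    by (cases k) (use x0 x_def closest_point_in_set[OF clX X_ne] in auto)
  have y_in: "y k \<in> X" for k using y_def closest_point_in_set[OF clX X_ne] by simp
  have prodQ: "0 < (\<Prod>i<k. (1 - beta i))" for k using beta_lt1 by (intro prod_pos) auto
  have P_pos: "0 < P k" for k unfolding P_def using prodQ by simp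
  have P_Suc: "P (Suc k) * (1 - beta k) = P k" for k
  proof -
    have "1 - beta k \<noteq> 0" using beta_lt1[of k] by simp
    have "(\<Prod>i<k. (1 - beta i)) \<noteq> 0" using prodQ[of k] by (metis order_less_irrefl)
    with \<open>1 - beta k \<noteq> 0\<close> show ?thesis unfolding P_def by (simp add: inverse_mult_distrib)
  qed
  have p_P: "p k = P (Suc k)" for k unfolding p_def P_def by (simp add: lessThan_Suc_atMost)
  have p_pos: "0 < p k" for k using p_P P_pos by simp
  have alpha_bd: "alpha k \<le> alpha 0 * (\<Prod>i<k. (1 - beta i))" for k
  proof (induction k)
    case 0 then show ?case by simp
  next
    case (Suc k)
    have "alpha (Suc k) \<le> (1 - beta k) * alpha k" by (rule alpha_dec')
    also have "\<dots> \<le> (1 - beta k) * (alpha 0 * (\<Prod>i<k. (1 - beta i)))"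
      using Suc beta_lt1[of k] by (intro mult_left_mono) auto
    finally show ?case by (simp add: algebra_simps)
  qed
  have alphaP: "alpha k * P k \<le> 1" for k
  proof -
    have "alpha k * P k \<le> alpha 0 * (\<Prod>i<k. (1 - beta i)) * P k"
      using alpha_bd[of k] P_pos[of k] by (intro mult_right_mono) auto
    also have "\<dots> = alpha 0" unfolding P_def using prodQ[of k]
      by (metis mult.assoc order_less_irrefl right_inverse mult.right_neutral)
    finally show ?thesis using alpha0 by simp
  qed
  have alpha_le1: "alpha k \<le> 1" for k
  proof -
    have pl1: "(\<Prod>i<k. (1 - beta i)) \<le> 1" using beta_pos beta_lt1 by (intro prod_le_1) (auto simp: less_imp_le)
    have "alpha 0 * (\<Prod>i<k. (1 - beta i)) \<le> 1"
      by (rule mult_le_one[OF alpha0 less_imp_le[OF prodQ[of k]] pl1])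
    thus ?thesis using alpha_bd[of k] by simp
  qed
  have diam: "norm (u - v) \<le> DX" if "u \<in> X" "v \<in> X" for u v
    using diameter_bounded_bound[OF bX that] unfolding DX_def by (simp add: dist_norm)
  have DX_nonneg: "0 \<le> DX" using diam[OF x0 x0] by simp
  have contH: "continuous_on X H"
    using lipschitz_on_continuous_on[OF H_lip] continuous_on_subset X_sub Om_sub by blast
  have "bounded (H ` X)" using compact_continuous_image[OF contH X_compact] compact_imp_bounded by blast
  then obtain B where B: "\<And>z. z \<in> X \<Longrightarrow> norm (H z) \<le> B" unfolding bounded_iff by auto
  have bddH: "bdd_above ((\<lambda>z. norm (H z)) ` S)" if "S \<subseteq> X" for S
    using B that by (intro bdd_aboveI2[where M=B]) auto
  have CH_bd: "norm (H z) \<le> CH" if "z \<in> X" for z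
    unfolding CH_def using bddH[of X] that by (intro cSUP_upper) auto
  have CH_nonneg: "0 \<le> CH" using CH_bd[OF x0] by (smt (verit) norm_ge_zero)
  have Q_sub: "Q \<subseteq> X" unfolding Q_def VI_sol_def by auto
  have Q_ne': "Q \<noteq> {}" using Q_ne unfolding Q_def .
  have BH_bd: "norm (H z) \<le> BH" if "z \<in> Q" for z
    unfolding BH_def using bddH[OF Q_sub] that by (intro cSUP_upper) auto
  have BH_nonneg: "0 \<le> BH" using Q_ne' BH_bd by (meson all_not_in_conv norm_ge_zero order_trans)
  have Glip: "norm (G u - G v) \<le> L * norm (u - v)" if "u \<in> \<Omega>" "v \<in> \<Omega>" for u v
  proof -
    have uv: "u \<in> DF" "v \<in> DF" "u \<in> DH" "v \<in> DH" using that Om_sub by auto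
    have f: "norm (F u - F v) \<le> LF * norm (u - v)" using lipschitz_onD[OF F_lip uv(1,2)] by (simp add: dist_norm)
    have h: "norm (H u - H v) \<le> LH * norm (u - v)" using lipschitz_onD[OF H_lip uv(3,4)] by (simp add: dist_norm)
    have "G u - G v = (F u - F v) + \<eta> *\<^sub>R (H u - H v)" unfolding G_def by (simp add: algebra_simps)
    hence "norm (G u - G v) \<le> norm (F u - F v) + \<eta> * norm (H u - H v)"
      using norm_triangle_ineq[of "F u - F v" "\<eta> *\<^sub>R (H u - H v)"] eta_pos by simp
    also have "\<dots> \<le> LF * norm (u - v) + \<eta> * (LH * norm (u - v))"
      using f h eta_pos by (intro add_mono mult_left_mono) auto
    finally show ?thesis unfolding L_def by (simp add: algebra_simps)
  qed
  have Gstrong: "inner (G u - G v) (u - v) \<ge> \<eta> * \<mu> * (norm (u - v))\<^sup>2" if "u \<in> X" "v \<in> X" for u v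
  proof -
    have uv: "u \<in> DF" "v \<in> DF" "u \<in> DH" "v \<in> DH" using that X_sub Om_sub by auto
    have f: "inner (F u - F v) (u - v) \<ge> 0" using F_mono uv unfolding monotone_op_def by blast
    have h: "inner (H u - H v) (u - v) \<ge> \<mu> * (norm (u - v))\<^sup>2" using H_strong uv unfolding strongly_monotone_op_def by blast
    have "inner (G u - G v) (u - v) = inner (F u - F v) (u - v) + \<eta> * inner (H u - H v) (u - v)"
      unfolding G_def by (simp add: algebra_simps inner_diff_left inner_add_left)
    thus ?thesis using f h eta_pos by (smt (verit) mult_left_mono mult.assoc)
  qed
  have w'_in: "w' k \<in> \<Omega>" for k using w'_def closest_point_in_set[OF Om_closed Om_ne] by simp
  have yOm: "y k \<in> \<Omega>" for k using y_in X_sub by auto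
  have key: "(norm (x (Suc j) - z))\<^sup>2 \<le> (1 - beta j) * (norm (w j - z))\<^sup>2 - 2 * lam j * inner (G z) (y j - z)"
    if zX: "z \<in> X" for j z
  proof -
    have nw: "norm (w' j - y j) \<le> norm (w j - y j)"
    proof -
      have "dist (closest_point \<Omega> (w j)) (closest_point \<Omega> (y j)) \<le> dist (w j) (y j)"
        by (rule closest_point_lipschitz[OF Om_convex Om_closed Om_ne])
      thus ?thesis using closest_point_self[OF yOm[of j]] w'_def[of j] by (simp add: dist_norm)
    qed
    have lipG: "norm (G (y j) - G (w' j)) \<le> L * norm (w' j - y j)"
      using Glip[OF yOm[of j] w'_in[of j]] by (simp add: norm_minus_commute)
    have st: "(norm (x (Suc j) - z))\<^sup>2 \<le> (norm (w j - z))\<^sup>2 - (1 - (lam j)\<^sup>2 * L\<^sup>2) * (norm (w j - y j))\<^sup>2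
           - 2 * lam j * inner (G (y j)) (y j - z)"
      by (rule eg_step[OF X_convex clX X_ne _ _ nw lipG zX lam_pos less_imp_le[OF L_pos]])
         (simp_all add: y_def x_def G_def)
    have sm: "inner (G (y j)) (y j - z) \<ge> \<eta> * \<mu> * (norm (y j - z))\<^sup>2 + inner (G z) (y j - z)"
    proof -
      have "inner (G (y j)) (y j - z) = inner (G (y j) - G z) (y j - z) + inner (G z) (y j - z)"
        by (simp add: inner_diff_left)
      thus ?thesis using Gstrong[OF y_in[of j] zX] by linarith
    qed
    have hm: "beta j * (norm (w j - z))\<^sup>2 \<le> (1 - (lam j)\<^sup>2 * L\<^sup>2) * (norm (w j - y j))\<^sup>2 + (2 * lam j * \<eta> * \<mu>) * (norm (y j - z))\<^sup>2"
    proof -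
      have "(norm (w j - z))\<^sup>2 \<le> (norm (w j - y j) + norm (y j - z))\<^sup>2"
        using norm_triangle_ineq[of "w j - y j" "y j - z"] by (intro power_mono) auto
      hence "beta j * (norm (w j - z))\<^sup>2 \<le> beta j * (norm (w j - y j) + norm (y j - z))\<^sup>2"
        using beta_pos[of j] by (intro mult_left_mono) auto
      also have "\<dots> \<le> (1 - (lam j)\<^sup>2 * L\<^sup>2) * (norm (w j - y j))\<^sup>2 + (2 * lam j * \<eta> * \<mu>) * (norm (y j - z))\<^sup>2"
        unfolding beta_def by (rule harm[OF a_pos b_pos norm_ge_zero norm_ge_zero])
      finally show ?thesis .
    qed
    have "2 * lam j * (\<eta> * \<mu> * (norm (y j - z))\<^sup>2 + inner (G z) (y j - z)) \<le> 2 * lam j * inner (G (y j)) (y j - z)"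
      using sm lam_pos[of j] by (intro mult_left_mono) auto
    thus ?thesis using st hm by (simp add: algebra_simps)
  qed
  have inert: "(norm (w j - z))\<^sup>2 \<le> (norm (x j - z))\<^sup>2 + (if j = 0 then 0 else 3 * alpha j * DX\<^sup>2)"
    if zX: "z \<in> X" for j z
  proof (cases j)
    case 0
    then show ?thesis using w_def[of 0] by simp
  next
    case (Suc i)
    let ?u = "x j - z" and ?v = "x j - x i"
    have wj: "w j - z = ?u + alpha j *\<^sub>R ?v" using w_def[of j] Suc by simp
    have "(norm (w j - z))\<^sup>2 = (norm ?u)\<^sup>2 + 2 * alpha j * inner ?u ?v + (alpha j)\<^sup>2 * (norm ?v)\<^sup>2"
      unfolding wj by (rule norm_add_scale_sq)
    moreover have "inner ?u ?v \<le> DX * DX"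
    proof -
      have "inner ?u ?v \<le> norm ?u * norm ?v" by (rule norm_cauchy_schwarz)
      also have "\<dots> \<le> DX * DX" using diam[OF x_in zX] diam[OF x_in x_in] DX_nonneg by (intro mult_mono) auto
      finally show ?thesis .
    qed
    moreover have "(norm ?v)\<^sup>2 \<le> DX\<^sup>2" using diam[OF x_in x_in, of j i] by (intro power_mono) auto
    moreover have "(alpha j)\<^sup>2 \<le> alpha j" using alpha_le1[of j] alpha_nonneg[of j] by (simp add: power2_eq_square mult_left_le)
    ultimately have "(norm (w j - z))\<^sup>2 \<le> (norm ?u)\<^sup>2 + 2 * alpha j * (DX * DX) + alpha j * DX\<^sup>2"
      using alpha_nonneg[of j] 
      by (smt (verit) mult_left_mono mult_right_mono zero_le_power2 mult_nonneg_nonneg)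
    thus ?thesis using Suc by (simp add: power2_eq_square algebra_simps)
  qed
  have sumbd: "(\<Sum>j<Suc m. 2 * lam j * p j * inner (G z) (y j - z)) \<le> DX\<^sup>2 * (1 + 3 * real m)"
    if zX: "z \<in> X" for m z
  proof -
    define a where "a = (\<lambda>j. (norm (x j - z))\<^sup>2)"
    define d where "d = (\<lambda>j. 2 * lam j * p j * inner (G z) (y j - z))"
    define e where "e = (\<lambda>j. P j * (if j = 0 then 0 else 3 * alpha j * DX\<^sup>2))"
    have stp: "P (Suc j) * a (Suc j) \<le> P j * a j + e j - d j" for j
    proof -
      have "P (Suc j) * a (Suc j) \<le> P (Suc j) * ((1 - beta j) * (norm (w j - z))\<^sup>2 - 2 * lam j * inner (G z) (y j - z))"
        unfolding a_def using key[OF zX, of j] P_pos[of "Suc j"] by (intro mult_left_mono) auto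
      also have "\<dots> = (P (Suc j) * (1 - beta j)) * (norm (w j - z))\<^sup>2 - d j"
        unfolding d_def p_P by (simp add: algebra_simps)
      also have "\<dots> = P j * (norm (w j - z))\<^sup>2 - d j"
        unfolding P_Suc by simp
      also have "\<dots> \<le> P j * ((norm (x j - z))\<^sup>2 + (if j = 0 then 0 else 3 * alpha j * DX\<^sup>2)) - d j"
        using inert[OF zX, of j] P_pos[of j] by (simp add: mult_left_mono)
      finally show ?thesis unfolding a_def e_def by (simp add: algebra_simps)
    qed
    have tel: "P (Suc m) * a (Suc m) + (\<Sum>j<Suc m. d j) \<le> P 0 * a 0 + (\<Sum>j<Suc m. e j)"
      by (rule telesc[where P=P and a=a and e=e and d=d, OF stp])
    have e_bd: "(\<Sum>j<Suc n. e j) \<le> 3 * DX\<^sup>2 * real n" for n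
    proof (induction n)
      case 0 then show ?case by (simp add: e_def)
    next
      case (Suc n)
      have "e (Suc n) \<le> 3 * DX\<^sup>2"
      proof -
        have "e (Suc n) = 3 * DX\<^sup>2 * (alpha (Suc n) * P (Suc n))" unfolding e_def by simp
        also have "\<dots> \<le> 3 * DX\<^sup>2 * 1" using alphaP[of "Suc n"] by (intro mult_left_mono) auto
        finally show ?thesis by simp
      qed
      then show ?case using Suc by (simp add: algebra_simps)
    qed
    have "P 0 * a 0 \<le> DX\<^sup>2" unfolding P_def a_def using diam[OF x0 zX] by (simp add: power_mono)
    moreover have "0 \<le> P (Suc m) * a (Suc m)" using P_pos[of "Suc m"] unfolding a_def by (intro mult_nonneg_nonneg) auto
    ultimately show ?thesis using tel e_bd[of m] unfolding d_def by (simp add: algebra_simps)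
  qed
  have Lam_pos: "0 < Lam (Suc m)" for m
    unfolding Lam_def using lam_pos eta_pos p_pos by (intro sum_pos) auto
  define cc where "cc = 1 / (1 - lam_hi\<^sup>2 * L\<^sup>2) + D0 / (lam_lo * \<mu> * \<epsilon>)"
  have D0_pos: "0 < D0" using eps_pos D0_gt by simp
  have hiL: "lam_hi * L < 1"
    using lam_u L_pos unfolding L_def by (simp add: field_simps)
  have ahi_pos: "0 < 1 - lam_hi\<^sup>2 * L\<^sup>2"
  proof -
    have "0 \<le> lam_hi * L" using lam_l_pos lam_lu L_pos by simp
    hence "(lam_hi * L)\<^sup>2 < 1" using hiL by (simp add: power_less_one_iff abs_less_iff)
    thus ?thesis by (simp add: power_mult_distrib)
  qed
  have cc_pos: "0 < cc" unfolding cc_def using ahi_pos D0_pos lam_l_pos mu_pos eps_pos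
    by (intro add_pos_pos) auto
  have beta_ge: "1 / cc \<le> beta i" for i
  proof -
    have "(lam i)\<^sup>2 \<le> lam_hi\<^sup>2" using lam_bounds[of i] lam_pos[of i] by (intro power_mono) auto
    hence "(lam i)\<^sup>2 * L\<^sup>2 \<le> lam_hi\<^sup>2 * L\<^sup>2" by (intro mult_right_mono) auto
    hence t1: "1 / (1 - (lam i)\<^sup>2 * L\<^sup>2) \<le> 1 / (1 - lam_hi\<^sup>2 * L\<^sup>2)"
      using ahi_pos by (intro divide_left_mono) auto
    have e: "2 * lam i * \<eta> * \<mu> = lam i * \<mu> * \<epsilon> / D0" unfolding eta_def using D0_pos by (simp add: field_simps)
    have t2: "1 / (2 * lam i * \<eta> * \<mu>) \<le> D0 / (lam_lo * \<mu> * \<epsilon>)"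
    proof -
      have "1 / (2 * lam i * \<eta> * \<mu>) = D0 / (lam i * \<mu> * \<epsilon>)" unfolding e by simp
      also have "\<dots> \<le> D0 / (lam_lo * \<mu> * \<epsilon>)"
        using lam_bounds[of i] lam_l_pos mu_pos eps_pos D0_pos
        by (intro divide_left_mono mult_right_mono mult_pos_pos) auto
      finally show ?thesis .
    qed
    have "1 / (1 - (lam i)\<^sup>2 * L\<^sup>2) + 1 / (2 * lam i * \<eta> * \<mu>) \<le> cc" unfolding cc_def using t1 t2 by linarith
    moreover have "0 < 1 / (1 - (lam i)\<^sup>2 * L\<^sup>2) + 1 / (2 * lam i * \<eta> * \<mu>)"
      using beta_pos[of i] unfolding beta_def by simp
    ultimately have "inverse cc \<le> beta i" unfolding beta_def by (rule le_imp_inverse_le)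
    thus ?thesis by (simp add: inverse_eq_divide)
  qed
  have p_ge_exp: "exp (real (Suc m) / cc) \<le> p m" for m
  proof -
    have "(\<Prod>i\<le>m. (1 - beta i)) \<le> (\<Prod>i\<le>m. exp (- (1 / cc)))"
    proof (intro prod_mono conjI)
      fix i
      show "0 \<le> 1 - beta i" using beta_lt1[of i] by simp
      have "1 - beta i \<le> 1 + - (1 / cc)" using beta_ge[of i] by simp
      also have "\<dots> \<le> exp (- (1 / cc))" by (rule exp_ge_add_one_self)
      finally show "1 - beta i \<le> exp (- (1 / cc))" .
    qed
    also have "\<dots> = exp (- (1 / cc)) ^ Suc m" by simp
    also have "\<dots> = exp (real (Suc m) * (- (1 / cc)))" by (rule exp_of_nat_mult[symmetric])
    also have "\<dots> = exp (- (real (Suc m) / cc))" by simp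
    finally have pr: "(\<Prod>i\<le>m. (1 - beta i)) \<le> exp (- (real (Suc m) / cc))" .
    have pr0: "0 < (\<Prod>i\<le>m. (1 - beta i))" using beta_lt1 by (intro prod_pos) auto
    have "inverse (exp (- (real (Suc m) / cc))) \<le> inverse (\<Prod>i\<le>m. (1 - beta i))"
      by (rule le_imp_inverse_le[OF pr pr0])
    thus ?thesis unfolding p_def by (simp add: exp_minus)
  qed
  have lam_big: "DX\<^sup>2 * (1 + 3 * real m) \<le> 2 * \<epsilon> * Lam (Suc m)"
    if hk: "cc * ln (2 * (real (Suc m) + 1) * DX\<^sup>2 * D0 / (lam_lo * \<epsilon>\<^sup>2)) \<le> real (Suc m)" for m
  proof (cases "DX = 0")
    case True
    then show ?thesis using Lam_pos[of m] eps_pos by simp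
  next
    case False
    hence DXp: "0 < DX" using DX_nonneg by simp
    obtain u v where uv: "u \<in> X" "v \<in> X" "u \<noteq> v"
    proof -
      have "\<not> (\<forall>u\<in>X. \<forall>v\<in>X. u = v)"
      proof
        assume "\<forall>u\<in>X. \<forall>v\<in>X. u = v"
        hence "X = {x 0}" using x0 by auto
        thus False using False unfolding DX_def by simp
      qed
      thus ?thesis using that by blast
    qed
    have mu_le: "\<mu> \<le> LH"
    proof -
      have uvD: "u \<in> DH" "v \<in> DH" using uv X_sub Om_sub by auto
      have "\<mu> * (norm (u - v))\<^sup>2 \<le> inner (H u - H v) (u - v)"
        using H_strong uvD unfolding strongly_monotone_op_def by blast
      also have "\<dots> \<le> norm (H u - H v) * norm (u - v)" by (rule norm_cauchy_schwarz)
      also have "\<dots> \<le> LH * norm (u - v) * norm (u - v)"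
        using lipschitz_onD[OF H_lip uvD] by (intro mult_right_mono) (auto simp: dist_norm)
      finally have "\<mu> * (norm (u - v))\<^sup>2 \<le> LH * (norm (u - v))\<^sup>2" by (simp add: power2_eq_square algebra_simps)
      moreover have "0 < (norm (u - v))\<^sup>2" using uv by simp
      ultimately show ?thesis by simp
    qed
    have beta23: "1 - beta j > 1/3" for j
    proof -
      have "1 \<le> 1 / (1 - (lam j)\<^sup>2 * L\<^sup>2)" using a_pos[of j] lam_pos[of j] L_pos by (simp add: field_simps)
      moreover have "2 * lam j * \<eta> * \<mu> < 2"
      proof -
        have "lam j * \<eta> * \<mu> \<le> lam j * (\<eta> * LH)" using mu_le lam_pos[of j] eta_pos by (simp add: mult_left_mono)
        also have "\<dots> \<le> lam j * L" unfolding L_def using lam_pos[of j] LF_pos by (intro mult_left_mono) auto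
        finally show ?thesis using lamL[of j] by simp
      qed
      hence "1/2 < 1 / (2 * lam j * \<eta> * \<mu>)" using b_pos[of j] by (simp add: field_simps)
      ultimately have "3/2 < 1 / (1 - (lam j)\<^sup>2 * L\<^sup>2) + 1 / (2 * lam j * \<eta> * \<mu>)" by linarith
      hence "inverse (1 / (1 - (lam j)\<^sup>2 * L\<^sup>2) + 1 / (2 * lam j * \<eta> * \<mu>)) < inverse (3/2)"
        by (intro less_imp_inverse_less) auto
      thus ?thesis unfolding beta_def by simp
    qed
    have p3: "p (Suc j) \<le> 3 * p j" for j
    proof -
      have "p (Suc j) * (1 - beta (Suc j)) = p j" using P_Suc[of "Suc j"] unfolding p_P .
      moreover have "p (Suc j) * (1/3) \<le> p (Suc j) * (1 - beta (Suc j))"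
        using beta23[of "Suc j"] p_pos[of "Suc j"] by (intro mult_left_mono) auto
      ultimately show ?thesis by simp
    qed
    have gs: "(\<Sum>j<Suc m. p j) \<ge> (3/2 - 1/(2*(real m + 1))) * p m"
      by (rule geo_sum[where q=p, OF p_pos p3])
    have Lam_ge: "lam_lo * \<eta> * (\<Sum>j<Suc m. p j) \<le> Lam (Suc m)"
      unfolding Lam_def sum_distrib_left
      using lam_bounds eta_pos p_pos by (intro sum_mono) (simp add: mult_right_mono)
    define A where "A = 2 * (real (Suc m) + 1) * DX\<^sup>2 * D0 / (lam_lo * \<epsilon>\<^sup>2)"
    have A_pos: "0 < A" unfolding A_def using DXp D0_pos lam_l_pos eps_pos by simp
    have "ln A \<le> real (Suc m) / cc" using hk cc_pos unfolding A_def by (simp add: field_simps)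
    hence "A \<le> exp (real (Suc m) / cc)" using A_pos by (metis exp_le_cancel_iff exp_ln)
    hence pA: "A \<le> p m" using p_ge_exp[of m] by simp
    have c0: "0 \<le> 3/2 - 1/(2*(real m + 1))" by (simp add: field_simps)
    have "lam_lo * \<eta> * ((3/2 - 1/(2*(real m + 1))) * A) \<le> lam_lo * \<eta> * ((3/2 - 1/(2*(real m + 1))) * p m)"
      using pA c0 lam_l_pos eta_pos by (intro mult_left_mono) auto
    also have "\<dots> \<le> lam_lo * \<eta> * (\<Sum>j<Suc m. p j)"
      using gs lam_l_pos eta_pos by (intro mult_left_mono) auto
    also have "\<dots> \<le> Lam (Suc m)" by (rule Lam_ge)
    finally have fin: "lam_lo * \<eta> * ((3/2 - 1/(2*(real m + 1))) * A) \<le> Lam (Suc m)" .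
    have idt: "2 * \<epsilon> * (lam_lo * \<eta> * ((3/2 - 1/(2*(real m + 1))) * A))
        = DX\<^sup>2 * ((real m + 2) * (3 - 1/(real m + 1)))"
    proof -
      have idA: "\<epsilon> * (lam_lo * \<eta> * A) = (real m + 2) * DX\<^sup>2"
        unfolding A_def eta_def power2_eq_square using lam_l_pos eps_pos D0_pos by (simp add: field_simps)
      have i2: "2 * (3/2 - 1/(2*(real m + 1))) = 3 - 1/(real m + 1)" by (simp add: field_simps)
      have "2 * \<epsilon> * (lam_lo * \<eta> * ((3/2 - 1/(2*(real m + 1))) * A))
          = (2 * (3/2 - 1/(2*(real m + 1)))) * (\<epsilon> * (lam_lo * \<eta> * A))" by (simp add: algebra_simps)
      also have "\<dots> = DX\<^sup>2 * ((real m + 2) * (3 - 1/(real m + 1)))" unfolding i2 idA by (simp add: algebra_simps add_divide_distrib)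
      finally show ?thesis .
    qed
    have "1 + 3 * real m \<le> (real m + 2) * (3 - 1/(real m + 1))"
      by (simp add: field_simps)
    hence "DX\<^sup>2 * (1 + 3 * real m) \<le> DX\<^sup>2 * ((real m + 2) * (3 - 1/(real m + 1)))"
      by (intro mult_left_mono) auto
    also have "\<dots> \<le> 2 * \<epsilon> * Lam (Suc m)" unfolding idt[symmetric] using fin eps_pos by simp
    finally show ?thesis .
  qed
  have main: "\<forall>k\<ge>1. int k \<ge> \<lceil>(1 / (1 - lam_hi\<^sup>2 * L\<^sup>2) + D0 / (lam_lo * \<mu> * \<epsilon>))
                          * ln (2 * (real k + 1) * DX\<^sup>2 * D0 / (lam_lo * \<epsilon>\<^sup>2))\<rceil> \<longrightarrow>
          (- BH * infdist (ybar k) Q \<le> Gap (ybar k) H Q \<and> Gap (ybar k) H Q \<le> \<epsilon>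
           \<and> 0 \<le> Gap (ybar k) F X \<and> Gap (ybar k) F X \<le> \<epsilon>
           \<and> (\<forall>\<sigma> M. \<sigma> > 0 \<and> M \<ge> 1 \<and> weakly_sharp \<sigma> M F X Q \<longrightarrow>
                 Gap (ybar k) H Q \<ge> - (BH / \<sigma> powr (1 / M)) * \<epsilon> powr (1 / M)))"
  proof (intro allI impI)
    fix k :: nat
    assume k1: "k \<ge> 1"
    assume hk0: "int k \<ge> \<lceil>(1 / (1 - lam_hi\<^sup>2 * L\<^sup>2) + D0 / (lam_lo * \<mu> * \<epsilon>))
                          * ln (2 * (real k + 1) * DX\<^sup>2 * D0 / (lam_lo * \<epsilon>\<^sup>2))\<rceil>"
    obtain m where k: "k = Suc m" using k1 by (cases k) auto
    have hk: "cc * ln (2 * (real (Suc m) + 1) * DX\<^sup>2 * D0 / (lam_lo * \<epsilon>\<^sup>2)) \<le> real (Suc m)"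
      using hk0 unfolding k cc_def ceiling_le_iff by simp
    have LB: "DX\<^sup>2 * (1 + 3 * real m) \<le> 2 * \<epsilon> * Lam (Suc m)" by (rule lam_big[OF hk])
    have Lp: "0 < Lam k" using Lam_pos k by simp
    have Lsum: "Lam k = (\<Sum>j<k. lam j * \<eta> * p j)" unfolding Lam_def ..
    have ybar_in: "ybar k \<in> X"
    proof -
      have "ybar k = (\<Sum>j<k. (lam j * \<eta> * p j / Lam k) *\<^sub>R y j)"
        unfolding ybar_def scaleR_sum_right by (simp add: divide_inverse mult.commute)
      also have "\<dots> \<in> X"
      proof (rule convex_sum[OF _ X_convex])
        show "(\<Sum>j<k. lam j * \<eta> * p j / Lam k) = 1"
          using Lp unfolding sum_divide_distrib[symmetric] Lsum[symmetric] by simp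
        show "0 \<le> lam j * \<eta> * p j / Lam k" for j using lam_pos[of j] eta_pos p_pos[of j] Lp by simp
      qed (auto simp: y_in)
      finally show ?thesis .
    qed
    have conv: "Lam k * inner (G z) (ybar k - z) = (\<eta> / 2) * (\<Sum>j<k. 2 * lam j * p j * inner (G z) (y j - z))" for z
    proof -
      have "Lam k *\<^sub>R (ybar k - z) = (\<Sum>j<k. (lam j * \<eta> * p j) *\<^sub>R y j) - (\<Sum>j<k. (lam j * \<eta> * p j) *\<^sub>R z)"
        unfolding ybar_def using Lp by (simp add: scaleR_diff_right Lsum scaleR_sum_left)
      also have "\<dots> = (\<Sum>j<k. (lam j * \<eta> * p j) *\<^sub>R (y j - z))"
        by (simp add: sum_subtractf scaleR_diff_right)
      finally have e: "Lam k *\<^sub>R (ybar k - z) = (\<Sum>j<k. (lam j * \<eta> * p j) *\<^sub>R (y j - z))" .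
      have "Lam k * inner (G z) (ybar k - z) = inner (G z) (Lam k *\<^sub>R (ybar k - z))" by simp
      also have "\<dots> = (\<Sum>j<k. (lam j * \<eta> * p j) * inner (G z) (y j - z))"
        unfolding e by (simp add: inner_sum_right)
      also have "\<dots> = (\<eta> / 2) * (\<Sum>j<k. 2 * lam j * p j * inner (G z) (y j - z))"
        by (simp add: sum_distrib_left algebra_simps)
      finally show ?thesis .
    qed
    have Gb: "inner (G z) (ybar k - z) \<le> \<eta> * \<epsilon>" if zX: "z \<in> X" for z
    proof -
      have "Lam k * inner (G z) (ybar k - z) \<le> (\<eta> / 2) * (DX\<^sup>2 * (1 + 3 * real m))"
        unfolding conv using sumbd[OF zX, of m] eta_pos unfolding k[symmetric] by (intro mult_left_mono) auto
      also have "\<dots> \<le> (\<eta> / 2) * (2 * \<epsilon> * Lam k)" using LB eta_pos k by (intro mult_left_mono) auto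
      also have "\<dots> = Lam k * (\<eta> * \<epsilon>)" by simp
      finally show ?thesis using Lp by simp
    qed
    have Gsplit: "inner (G z) (ybar k - z) = inner (F z) (ybar k - z) + \<eta> * inner (H z) (ybar k - z)" for z
      unfolding G_def by (simp add: inner_add_left)
    have Hb: "inner (H z) (ybar k - z) \<le> \<epsilon>" if zQ: "z \<in> Q" for z
    proof -
      have "inner (F z) (ybar k - z) \<ge> 0" using zQ ybar_in unfolding Q_def VI_sol_def by auto
      hence "\<eta> * inner (H z) (ybar k - z) \<le> \<eta> * \<epsilon>" using Gb[of z] zQ Q_sub Gsplit[of z] by auto
      thus ?thesis using eta_pos by simp
    qed
    have Fb: "inner (F z) (ybar k - z) \<le> \<epsilon>" if zX: "z \<in> X" for z
    proof -
      have "- inner (H z) (ybar k - z) \<le> norm (H z) * norm (ybar k - z)"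
        using norm_cauchy_schwarz[of "- H z" "ybar k - z"] by simp
      also have "\<dots> \<le> CH * DX" using CH_bd[OF zX] diam[OF ybar_in zX] CH_nonneg by (intro mult_mono) auto
      finally have "- (\<eta> * inner (H z) (ybar k - z)) \<le> \<eta> * (CH * DX)" using eta_pos
        by (metis minus_mult_right mult_le_cancel_left_pos)
      moreover have "\<eta> * (CH * DX) \<le> \<epsilon> / 2"
      proof -
        have "CH * DX \<le> lam_hi * CH * DX / lam_lo"
        proof -
          have "lam_hi / lam_lo \<ge> 1" using lam_lu lam_l_pos by simp
          hence "CH * DX * 1 \<le> CH * DX * (lam_hi / lam_lo)" using CH_nonneg DX_nonneg by (intro mult_left_mono) auto
          thus ?thesis by (simp add: algebra_simps)
        qed
        also have "\<dots> \<le> D0" using D0_ge unfolding CH_def DX_def .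
        finally have "CH * DX \<le> D0" .
        hence "\<eta> * (CH * DX) \<le> \<eta> * D0" using eta_pos by simp
        also have "\<eta> * D0 = \<epsilon> / 2" unfolding eta_def using D0_pos by simp
        finally show ?thesis .
      qed
      moreover have "\<eta> * \<epsilon> \<le> \<epsilon> / 2" using eta_half eps_pos by simp
      ultimately show ?thesis using Gb[OF zX] Gsplit[of z] by linarith
    qed
    have bddHQ: "bdd_above ((\<lambda>z. inner (H z) (ybar k - z)) ` Q)" using Hb by (intro bdd_aboveI2[where M=\<epsilon>]) auto
    have bddFX: "bdd_above ((\<lambda>z. inner (F z) (ybar k - z)) ` X)" using Fb by (intro bdd_aboveI2[where M=\<epsilon>]) auto
    have GH_le: "Gap (ybar k) H Q \<le> \<epsilon>" unfolding Gap_def by (rule cSUP_least[OF Q_ne']) (use Hb in auto)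
    have GF_le: "Gap (ybar k) F X \<le> \<epsilon>" unfolding Gap_def by (rule cSUP_least[OF X_ne]) (use Fb in auto)
    have GF_ge: "0 \<le> Gap (ybar k) F X" unfolding Gap_def by (rule cSUP_upper2[OF bddFX ybar_in]) simp
    have GH_pt: "- BH * norm (ybar k - z) \<le> Gap (ybar k) H Q" if zQ: "z \<in> Q" for z
    proof -
      have "- BH * norm (ybar k - z) \<le> - (norm (H z) * norm (ybar k - z))"
        using BH_bd[OF zQ] by (simp add: mult_right_mono)
      also have "\<dots> \<le> inner (H z) (ybar k - z)"
        using norm_cauchy_schwarz[of "- H z" "ybar k - z"] by simp
      also have "\<dots> \<le> Gap (ybar k) H Q" unfolding Gap_def by (rule cSUP_upper[OF zQ bddHQ])
      finally show ?thesis .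
    qed
    have GH_ge: "- BH * infdist (ybar k) Q \<le> Gap (ybar k) H Q"
    proof (cases "BH = 0")
      case True
      obtain z where "z \<in> Q" using Q_ne' by auto
      then show ?thesis using GH_pt[of z] True by simp
    next
      case False
      hence BHp: "0 < BH" using BH_nonneg by simp
      have "- Gap (ybar k) H Q / BH \<le> norm (ybar k - z)" if "z \<in> Q" for z
        using GH_pt[OF that] BHp by (simp add: field_simps)
      hence "- Gap (ybar k) H Q / BH \<le> infdist (ybar k) Q"
        unfolding infdist_def using Q_ne' by (simp add: dist_norm) (rule cINF_greatest, auto simp: dist_norm norm_minus_commute)
      thus ?thesis using BHp by (simp add: field_simps)
    qed
    have WS: "Gap (ybar k) H Q \<ge> - (BH / \<sigma> powr (1 / M)) * \<epsilon> powr (1 / M)"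
      if ws: "\<sigma> > 0 \<and> M \<ge> 1 \<and> weakly_sharp \<sigma> M F X Q" for \<sigma> M
    proof -
      have sp: "\<sigma> > 0" and M1: "M \<ge> 1" and wsh: "weakly_sharp \<sigma> M F X Q" using ws by auto
      obtain z where zQ: "z \<in> Q" using Q_ne' by auto
      define d where "d = infdist (ybar k) Q"
      have d0: "0 \<le> d" unfolding d_def by (rule infdist_nonneg)
      have "\<sigma> * d powr M \<le> inner (F z) (ybar k - z)"
        using wsh zQ ybar_in unfolding weakly_sharp_def d_def by blast
      also have "\<dots> \<le> Gap (ybar k) F X" unfolding Gap_def using zQ Q_sub by (intro cSUP_upper[OF _ bddFX]) auto
      also have "\<dots> \<le> \<epsilon>" by (rule GF_le)
      finally have "d powr M \<le> \<epsilon> / \<sigma>" using sp by (simp add: field_simps mult.commute)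
      hence "(d powr M) powr (1 / M) \<le> (\<epsilon> / \<sigma>) powr (1 / M)"
        using M1 by (intro powr_mono2) auto
      moreover have "(d powr M) powr (1 / M) = d" using M1 d0 by (simp add: powr_powr)
      ultimately have "d \<le> \<epsilon> powr (1 / M) / \<sigma> powr (1 / M)" by (simp add: powr_divide)
      hence "BH * d \<le> BH * (\<epsilon> powr (1 / M) / \<sigma> powr (1 / M))"
        using BH_nonneg by (rule mult_left_mono)
      hence "- BH * (\<epsilon> powr (1 / M) / \<sigma> powr (1 / M)) \<le> - BH * d" by simp
      hence "- (BH / \<sigma> powr (1 / M)) * \<epsilon> powr (1 / M) \<le> - BH * d" by (simp add: algebra_simps)
      thus ?thesis using GH_ge unfolding d_def by linarith
    qed
    show "- BH * infdist (ybar k) Q \<le> Gap (ybar k) H Q \<and> Gap (ybar k) H Q \<le> \<epsilon>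
           \<and> 0 \<le> Gap (ybar k) F X \<and> Gap (ybar k) F X \<le> \<epsilon>
           \<and> (\<forall>\<sigma> M. \<sigma> > 0 \<and> M \<ge> 1 \<and> weakly_sharp \<sigma> M F X Q \<longrightarrow>
                 Gap (ybar k) H Q \<ge> - (BH / \<sigma> powr (1 / M)) * \<epsilon> powr (1 / M))"
      using GH_ge GH_le GF_ge GF_le WS by blast
  qed
  show ?thesis
    using main unfolding Let_def L_def Q_def DX_def BH_def ybar_def Lam_def p_def beta_def .
qed

end
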